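(* Let $\alpha>0$, $x\in\mathbb{R}^+$ and $r>0$. Let $B_\delta(x,r)=\{y\in\mathbb{R}^+:\delta(x,y)<r\}$. All integrals below are in $y$, with integrand a function of $\delta(x,y)$. (a) $B_\delta(x,r)$ is the largest dyadic interval in $\mathcal{D}$ that contains $x$ and has measure less than $r$. Denote it by $I(x,r)$. (b) $\displaystyle\int_{B_\delta(x,r)}\frac{dy}{\delta(x,y)^{1-\alpha}}=\frac{1}{2(1-2^{-\alpha})}|I(x,r)|^{\alpha}$. This quantity is comparable to $r^\alpha$, with constants depending only on $\alpha$. (c) $\displaystyle\int_{B_\delta(x,r)}\frac{dy}{\delta(x,y)^{1+\alpha}}=+\infty$. (d) $\displaystyle\int_{\mathbb{R}^+\setminus B_\delta(x,r)}\frac{dy}{\delta(x,y)^{1+\alpha}}=\frac{2^{-\alpha}}{2(1-2^{-\alpha})}|I(x,r)|^{-\alpha}$. This quantity is comparable to $r^{-\alpha}$, with constants depending only on $\alpha$. (e) $\displaystyle\int_{\mathbb{R}^+\setminus B_\delta(x,r)}\frac{dy}{\delta(x,y)^{1-\alpha}}=+\infty$. (f) $\displaystyle\int_{B_\delta(x,r)}\frac{dy}{\delta(x,y)}=\int_{\mathbb{R}^+\setminus B_\delta(x,r)}\frac{dy}{\delta(x,y)}=+\infty$.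
   Context: Let $\mathbb{R}^+=(0,\infty)$. $\mathcal{D}$ is the family of dyadic intervals in $\mathbb{R}^+$, namely the intervals $I^j_k=(k2^{-j},(k+1)2^{-j}]$ with $j\in\mathbb{Z}$ and $k$ a nonnegative integer. The dyadic distance on $\mathbb{R}^+$ is $\delta(x,y)=\inf\{|I|: I\in\mathcal{D},\ x,y\in I\}$. It is a metric and satisfies $|x-y|\le\delta(x,y)$. *)

theory Defs
  imports "HOL-Analysis.Analysis"
begin

definition dyadic_interval :: "int \<Rightarrow> nat \<Rightarrow> real set" where
  "dyadic_interval j k = {real k * 2 powr (- real_of_int j) <.. (real k + 1) * 2 powr (- real_of_int j)}"

definition dyadic_family :: "real set set" where
  "dyadic_family = {dyadic_interval j k | j k. True}"

definition dyadic_dist :: "real \<Rightarrow> real \<Rightarrow> real" where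
  "dyadic_dist x y = Inf {measure lborel I | I. I \<in> dyadic_family \<and> x \<in> I \<and> y \<in> I}"

definition dyadic_ball :: "real \<Rightarrow> real \<Rightarrow> real set" where
  "dyadic_ball x r = {y. 0 < y \<and> dyadic_dist x y < r}"

end

theory Submission
  imports Defs
begin

definition lv :: "int \<Rightarrow> real" where "lv j = 2 powr (- real_of_int j)"
definition kx :: "real \<Rightarrow> int \<Rightarrow> nat" where "kx x j = nat (\<lceil>x / lv j\<rceil> - 1)"
definition DI :: "real \<Rightarrow> int \<Rightarrow> real set" where "DI x j = dyadic_interval j (kx x j)"

lemma lv_pos: "lv j > 0" by (simp add: lv_def)

lemma lv_succ: "lv (j+1) = lv j / 2"
proof -
  have "- real_of_int (j+1) = - real_of_int j - 1" by simp
  then show ?thesis unfolding lv_def by (simp only: powr_diff powr_one)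
qed

lemma lv_pred: "lv (j-1) = 2 * lv j"
  using lv_succ[of "j-1"] by simp

lemma lv_strict: "i < j \<Longrightarrow> lv j < lv i"
  unfolding lv_def by (intro powr_less_mono) auto

lemma lv_mono: "i \<le> j \<Longrightarrow> lv j \<le> lv i"
  unfolding lv_def by (intro powr_mono) auto

lemma di_eq: "dyadic_interval j k = {real k * lv j <.. (real k + 1) * lv j}"
  by (simp add: dyadic_interval_def lv_def)

lemma mem_di_iff:
  assumes "x > 0" shows "x \<in> dyadic_interval j k \<longleftrightarrow> k = kx x j"
proof -
  have l: "lv j > 0" by (rule lv_pos)
  have "x \<in> dyadic_interval j k \<longleftrightarrow> real k < x / lv j \<and> x / lv j \<le> real k + 1"
    using l by (simp add: di_eq field_simps)
  also have "\<dots> \<longleftrightarrow> \<lceil>x / lv j\<rceil> = int k + 1"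
  proof
    assume "real k < x / lv j \<and> x / lv j \<le> real k + 1"
    then show "\<lceil>x / lv j\<rceil> = int k + 1" by (intro ceiling_unique) auto
  next
    assume h: "\<lceil>x / lv j\<rceil> = int k + 1"
    have "of_int \<lceil>x / lv j\<rceil> - 1 < x / lv j" by (rule ceiling_correct[THEN conjunct1])
    moreover have "x / lv j \<le> of_int \<lceil>x / lv j\<rceil>" by (rule le_of_int_ceiling)
    ultimately show "real k < x / lv j \<and> x / lv j \<le> real k + 1" using h by simp
  qed
  also have "\<dots> \<longleftrightarrow> k = kx x j"
  proof -
    have "x / lv j > 0" using l assms by simp
    then have "\<lceil>x / lv j\<rceil> \<ge> 1" by (simp add: one_le_ceiling)
    then show ?thesis unfolding kx_def by auto
  qed
  finally show ?thesis .
qed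

lemma x_in_DI: "x > 0 \<Longrightarrow> x \<in> DI x j"
  unfolding DI_def using mem_di_iff by blast

lemma di_pos: "dyadic_interval j k \<subseteq> {0<..}"
proof
  fix y assume "y \<in> dyadic_interval j k"
  then have "real k * lv j < y" by (simp add: di_eq)
  moreover have "0 \<le> real k * lv j" using lv_pos[of j] by simp
  ultimately show "y \<in> {0<..}" by simp
qed

lemma DI_pos: "DI x j \<subseteq> {0<..}" unfolding DI_def by (rule di_pos)

lemma di_sets[measurable]: "dyadic_interval j k \<in> sets lborel"
  by (simp add: di_eq)

lemma DI_sets[measurable]: "DI x j \<in> sets lborel"
  unfolding DI_def by (rule di_sets)

lemma di_emeasure: "emeasure lborel (dyadic_interval j k) = ennreal (lv j)"
  using lv_pos[of j] by (simp add: di_eq algebra_simps)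

lemma di_measure: "measure lborel (dyadic_interval j k) = lv j"
  using lv_pos[of j] by (simp add: di_eq algebra_simps)

lemma di_nest: "dyadic_interval (j+1) k \<subseteq> dyadic_interval j (k div 2)"
proof -
  have k: "k = 2 * (k div 2) + k mod 2" by simp
  have m: "k mod 2 \<le> 1" by simp
  have a0: "2 * (k div 2) \<le> k" by simp
  have a: "2 * real (k div 2) \<le> real k"
    using of_nat_le_iff[of "2 * (k div 2)" k, where 'a=real] a0 by simp
  have b: "real k + 1 \<le> 2 * real (k div 2) + 2"
  proof -
    have "k + 1 \<le> 2 * (k div 2) + 2" using k m by linarith
    then show ?thesis using of_nat_le_iff[of "k+1" "2 * (k div 2) + 2", where 'a=real] by simp
  qed
  have l: "lv (j+1) > 0" by (rule lv_pos)
  have e: "lv j = 2 * lv (j+1)" using lv_succ[of j] by simp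
  show ?thesis unfolding di_eq e
  proof
    fix y assume "y \<in> {real k * lv (j + 1)<..(real k + 1) * lv (j + 1)}"
    then have y1: "real k * lv (j + 1) < y" and y2: "y \<le> (real k + 1) * lv (j + 1)" by auto
    have "real (k div 2) * (2 * lv (j + 1)) \<le> real k * lv (j+1)"
      using mult_right_mono[OF a, of "lv (j+1)"] l by (simp add: algebra_simps)
    moreover have "(real k + 1) * lv (j + 1) \<le> (real (k div 2) + 1) * (2 * lv (j + 1))"
      using mult_right_mono[OF b, of "lv (j+1)"] l by (simp add: algebra_simps)
    ultimately show "y \<in> {real (k div 2) * (2 * lv (j + 1))<..(real (k div 2) + 1) * (2 * lv (j + 1))}"
      using y1 y2 by auto
  qed
qed

lemma DI_succ: assumes "x > 0" shows "DI x (j+1) \<subseteq> DI x j"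
proof -
  have "x \<in> dyadic_interval j (kx x (j+1) div 2)"
    using di_nest x_in_DI[OF assms, of "j+1"] unfolding DI_def by blast
  then have "kx x (j+1) div 2 = kx x j" using mem_di_iff[OF assms] by blast
  then show ?thesis using di_nest unfolding DI_def by metis
qed

lemma DI_mono: assumes "x > 0" "i \<le> j" shows "DI x j \<subseteq> DI x i"
  using assms(2)
proof (induction j rule: int_ge_induct)
  case base then show ?case by simp
next
  case (step k) then show ?case using DI_succ[OF assms(1), of k] by blast
qed

lemma fam_DI: assumes "J \<in> dyadic_family" "x > 0" "x \<in> J" shows "\<exists>j. J = DI x j"
proof -
  obtain j k where J: "J = dyadic_interval j k" using assms(1) unfolding dyadic_family_def by blast
  then have "k = kx x j" using mem_di_iff[OF assms(2)] assms(3) by blast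
  then show ?thesis using J unfolding DI_def by blast
qed

lemma DI_fam: "DI x j \<in> dyadic_family"
  unfolding DI_def dyadic_family_def by blast

lemma dist_set: assumes "x > 0"
  shows "{measure lborel I | I. I \<in> dyadic_family \<and> x \<in> I \<and> y \<in> I} = {lv j | j. y \<in> DI x j}"
proof (rule set_eqI, rule iffI)
  fix t assume "t \<in> {measure lborel I | I. I \<in> dyadic_family \<and> x \<in> I \<and> y \<in> I}"
  then obtain I where I: "t = measure lborel I" "I \<in> dyadic_family" "x \<in> I" "y \<in> I" by blast
  then obtain j where "I = DI x j" using fam_DI assms by blast
  then show "t \<in> {lv j | j. y \<in> DI x j}" using I by (auto simp: DI_def di_measure)
next
  fix t assume "t \<in> {lv j | j. y \<in> DI x j}"
  then obtain j where "t = lv j" "y \<in> DI x j" by blast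
  then show "t \<in> {measure lborel I | I. I \<in> dyadic_family \<and> x \<in> I \<and> y \<in> I}"
    using DI_fam[of x j] x_in_DI[OF assms, of j]
    by (intro CollectI exI[of _ "DI x j"]) (auto simp: DI_def di_measure)
qed

lemma width: assumes "x \<in> DI x j" "y \<in> DI x j" shows "\<bar>x - y\<bar> < lv j"
proof -
  define a where "a = real (kx x j) * lv j"
  have e: "(real (kx x j) + 1) * lv j = a + lv j" by (simp add: a_def distrib_right)
  have "x \<in> {a<..a + lv j}" "y \<in> {a<..a + lv j}"
    using assms unfolding DI_def di_eq e a_def[symmetric] by auto
  then show ?thesis by auto
qed

lemma big: assumes "x > 0" "y > 0" shows "\<exists>j. y \<in> DI x j"
proof -
  obtain n where n: "max x y < 2 ^ n" using real_arch_pow[of 2 "max x y"] by auto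
  define j where "j = - int n"
  have lvj: "lv j = 2 ^ n" by (simp add: lv_def j_def powr_realpow)
  have "x \<in> dyadic_interval j 0" "y \<in> dyadic_interval j 0"
    using n assms by (auto simp: di_eq lvj)
  then have "0 = kx x j" using mem_di_iff[OF assms(1)] by blast
  then show ?thesis using \<open>y \<in> dyadic_interval j 0\<close> unfolding DI_def by metis
qed

lemma small: assumes "x > 0" "y \<noteq> x" shows "\<exists>j. y \<notin> DI x j"
proof -
  have d: "\<bar>x - y\<bar> > 0" using assms by simp
  obtain n where n: "1 / \<bar>x - y\<bar> < 2 ^ n" using real_arch_pow[of 2 "1 / \<bar>x - y\<bar>"] by auto
  have lvj: "lv (int n) = 1 / 2 ^ n" by (simp add: lv_def powr_minus powr_realpow divide_inverse)
  have "lv (int n) < \<bar>x - y\<bar>" using n d unfolding lvj by (simp add: field_simps)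
  then show ?thesis using width x_in_DI[OF assms(1)] by (meson not_less_iff_gr_or_eq order.strict_trans)
qed

lemma shell: assumes "x > 0" "y > 0" "y \<noteq> x" shows "\<exists>j. y \<in> DI x j \<and> y \<notin> DI x (j+1)"
proof -
  obtain j1 where j1: "y \<in> DI x j1" using big assms by blast
  obtain j2 where j2: "y \<notin> DI x j2" using small assms by blast
  have "j1 < j2" using DI_mono[OF assms(1), of j2 j1] j1 j2 by (metis not_less subsetD)
  define P where "P n = (y \<notin> DI x (j1 + int n))" for n
  have Pn: "P (nat (j2 - j1))" using j2 \<open>j1 < j2\<close> by (simp add: P_def)
  define n where "n = (LEAST n. P n)"
  have "P n" unfolding n_def using Pn by (rule LeastI)
  have "n \<noteq> 0"
  proof
    assume "n = 0" then show False using \<open>P n\<close> j1 by (simp add: P_def)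
  qed
  then have "n - 1 < (LEAST n. P n)" unfolding n_def[symmetric] by simp
  then have "\<not> P (n - 1)" by (rule not_less_Least)
  then have "y \<in> DI x (j1 + int (n-1))" by (simp add: P_def)
  moreover have "y \<notin> DI x (j1 + int (n-1) + 1)" using \<open>P n\<close> \<open>n \<noteq> 0\<close> by (simp add: P_def of_nat_diff)
  ultimately show ?thesis by blast
qed

lemma shell_iff: assumes "x > 0" "y \<in> DI x j" "y \<notin> DI x (j+1)"
  shows "y \<in> DI x i \<longleftrightarrow> i \<le> j"
proof
  assume "y \<in> DI x i"
  show "i \<le> j"
  proof (rule ccontr)
    assume "\<not> i \<le> j"
    then have "j + 1 \<le> i" by simp
    then have "DI x i \<subseteq> DI x (j+1)" by (rule DI_mono[OF assms(1)])
    then show False using assms \<open>y \<in> DI x i\<close> by blast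
  qed
next
  assume "i \<le> j" then show "y \<in> DI x i" using DI_mono[OF assms(1) \<open>i \<le> j\<close>] assms(2) by blast
qed

lemma dist_shell: assumes "x > 0" "y \<in> DI x j" "y \<notin> DI x (j+1)"
  shows "dyadic_dist x y = lv j"
proof -
  have "dyadic_dist x y = Inf {lv i | i. y \<in> DI x i}"
    by (simp only: dyadic_dist_def dist_set[OF assms(1)])
  also have "{lv i | i. y \<in> DI x i} = {lv i | i. i \<le> j}"
  proof -
    have "\<And>i. y \<in> DI x i \<longleftrightarrow> i \<le> j" by (rule shell_iff[OF assms])
    then show ?thesis by simp
  qed
  also have "Inf \<dots> = lv j"
  proof (rule cInf_eq_minimum)
    show "lv j \<in> {lv i | i. i \<le> j}" by blast
  next
    fix t assume "t \<in> {lv i | i. i \<le> j}"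
    then obtain i where "t = lv i" "i \<le> j" by blast
    then show "lv j \<le> t" using lv_mono by simp
  qed
  finally show ?thesis .
qed

lemma dist_self: assumes "x > 0" shows "dyadic_dist x x = 0"
proof -
  have "dyadic_dist x x = Inf {lv i | i. x \<in> DI x i}"
    by (simp only: dyadic_dist_def dist_set[OF assms(1)])
  also have "{lv i | i. x \<in> DI x i} = range lv"
    using x_in_DI[OF assms] by auto
  finally have e: "dyadic_dist x x = Inf (range lv)" .
  have bdd: "bdd_below (range lv)" using lv_pos by (intro bdd_belowI[of _ 0]) (auto intro: less_imp_le)
  have ge: "Inf (range lv) \<ge> 0" using lv_pos by (intro cINF_greatest) (auto intro: less_imp_le)
  have le: "Inf (range lv) \<le> 0"
  proof (rule ccontr)
    assume "\<not> Inf (range lv) \<le> 0"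
    then have p: "Inf (range lv) > 0" by simp
    obtain n where n: "1 / Inf (range lv) < 2 ^ n" using real_arch_pow[of 2] by auto
    have lvj: "lv (int n) = 1 / 2 ^ n" by (simp add: lv_def powr_minus powr_realpow divide_inverse)
    have "lv (int n) < Inf (range lv)" using n p unfolding lvj by (simp add: field_simps)
    moreover have "Inf (range lv) \<le> lv (int n)" using bdd by (rule cINF_lower) simp
    ultimately show False by simp
  qed
  show ?thesis using e ge le by simp
qed

lemma j0_ex: assumes "r > 0" shows "\<exists>j0. lv j0 < r \<and> r \<le> 2 * lv j0"
proof -
  define j0 where "j0 = \<lfloor>- log 2 r\<rfloor> + 1"
  have a: "- real_of_int j0 < log 2 r"
    using real_of_int_floor_add_one_gt[of "- log 2 r"] unfolding j0_def by linarith
  have b: "log 2 r \<le> 1 - real_of_int j0"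
    using of_int_floor_le[of "- log 2 r"] unfolding j0_def by linarith
  have "lv j0 < r"
  proof -
    have "lv j0 < 2 powr (log 2 r)" unfolding lv_def using a by (intro powr_less_mono) auto
    then show ?thesis using assms by simp
  qed
  moreover have "r \<le> 2 * lv j0"
  proof -
    have "2 powr (log 2 r) \<le> 2 powr (1 - real_of_int j0)" using b by (intro powr_mono) auto
    then have "r \<le> 2 powr (1 - real_of_int j0)" using assms by simp
    also have "\<dots> = 2 * lv j0" by (simp add: lv_def powr_diff powr_minus divide_inverse)
    finally show ?thesis .
  qed
  ultimately show ?thesis by blast
qed

lemma ball_eq: assumes "x > 0" "lv j0 < r" "r \<le> 2 * lv j0"
  shows "dyadic_ball x r = DI x j0"
proof (rule set_eqI)
  fix y
  show "y \<in> dyadic_ball x r \<longleftrightarrow> y \<in> DI x j0"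
  proof (cases "y > 0")
    case False then show ?thesis using DI_pos[of x j0] by (auto simp: dyadic_ball_def)
  next
    case True
    show ?thesis
    proof (cases "y = x")
      case True then show ?thesis using assms dist_self x_in_DI lv_pos[of j0]
        by (auto simp: dyadic_ball_def)
    next
      case False
      obtain j where j: "y \<in> DI x j" "y \<notin> DI x (j+1)" using shell[OF assms(1) \<open>y > 0\<close> False] by blast
      have d: "dyadic_dist x y = lv j" using dist_shell[OF assms(1) j] .
      have "lv j < r \<longleftrightarrow> j0 \<le> j"
      proof
        assume "lv j < r"
        show "j0 \<le> j"
        proof (rule ccontr)
          assume "\<not> j0 \<le> j"
          then have "j \<le> j0 - 1" by simp
          then have "lv (j0 - 1) \<le> lv j" by (rule lv_mono)
          then show False using lv_pred[of j0] assms \<open>lv j < r\<close> by simp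
        qed
      next
        assume "j0 \<le> j" then show "lv j < r" using lv_mono[of j0 j] assms by simp
      qed
      then show ?thesis using shell_iff[OF assms(1) j, of j0] d \<open>y > 0\<close> by (simp add: dyadic_ball_def)
    qed
  qed
qed

definition S :: "real \<Rightarrow> int \<Rightarrow> real set" where "S x j = DI x j - DI x (j+1)"

lemma S_sets[measurable]: "S x j \<in> sets lborel"
  unfolding S_def using DI_sets by (rule sets.Diff) (rule DI_sets)

lemma DI_borel: "DI x j \<in> sets borel" using DI_sets[of x j] by simp

lemma S_emeasure: assumes "x > 0" shows "emeasure lborel (S x j) = ennreal (lv j / 2)"
proof -
  have m: "emeasure lborel (DI x i) = ennreal (lv i)" for i
    unfolding DI_def by (rule di_emeasure)
  have "emeasure lborel (S x j) = emeasure lborel (DI x j) - emeasure lborel (DI x (j+1))"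
    unfolding S_def by (rule emeasure_Diff) (auto simp: m DI_succ[OF assms] intro: DI_borel)
  also have "\<dots> = ennreal (lv j) - ennreal (lv j / 2)" by (simp only: m lv_succ)
  also have "\<dots> = ennreal (lv j - lv j / 2)" using lv_pos[of j] by (intro ennreal_minus) simp
  also have "lv j - lv j / 2 = lv j / 2" by simp
  finally show ?thesis .
qed

lemma S_mem: assumes "x > 0" "y \<in> DI x j" "y \<notin> DI x (j+1)"
  shows "y \<in> S x i \<longleftrightarrow> i = j"
  using shell_iff[OF assms, of i] shell_iff[OF assms, of "i+1"] unfolding S_def by auto

lemma S_pos: "S x j \<subseteq> {0<..}" unfolding S_def using DI_pos by blast

lemma x_notin_S: "x > 0 \<Longrightarrow> x \<notin> S x j"
  unfolding S_def using x_in_DI by blast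

lemma decomp:
  assumes "\<And>y. ennreal (F y) * indicator A y = (\<Sum>m. ennreal (c m) * indicator (S x (idx m)) y)"
    "x > 0"
  shows "(\<integral>\<^sup>+ y \<in> A. ennreal (F y) \<partial>lborel) = (\<Sum>m. ennreal (c m) * ennreal (lv (idx m) / 2))"
proof -
  have "(\<integral>\<^sup>+ y \<in> A. ennreal (F y) \<partial>lborel) = (\<integral>\<^sup>+ y. (\<Sum>m. ennreal (c m) * indicator (S x (idx m)) y) \<partial>lborel)"
    by (rule nn_integral_cong) (rule assms(1))
  also have "\<dots> = (\<Sum>m. \<integral>\<^sup>+ y. ennreal (c m) * indicator (S x (idx m)) y \<partial>lborel)"
    by (rule nn_integral_suminf) simp
  also have "\<dots> = (\<Sum>m. ennreal (c m) * emeasure lborel (S x (idx m)))"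
    by (intro suminf_cong nn_integral_cmult_indicator) (rule S_sets)
  also have "\<dots> = (\<Sum>m. ennreal (c m) * ennreal (lv (idx m) / 2))"
    by (simp only: S_emeasure[OF assms(2)])
  finally show ?thesis .
qed

lemma single_sum:
  fixes f :: "nat \<Rightarrow> ennreal"
  assumes "\<And>m. m \<noteq> k \<Longrightarrow> f m = 0" shows "(\<Sum>m. f m) = f k"
  using suminf_finite[of "{k}" f] assms by simp

lemma inner_decomp:
  assumes x: "x > 0" and h0: "h 0 \<le> 0"
  shows "(\<integral>\<^sup>+ y \<in> DI x j0. ennreal (h (dyadic_dist x y)) \<partial>lborel)
       = (\<Sum>m. ennreal (h (lv (j0 + int m))) * ennreal (lv (j0 + int m) / 2))"
proof (rule decomp[OF _ x])
  fix y
  show "ennreal (h (dyadic_dist x y)) * indicator (DI x j0) y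
      = (\<Sum>m. ennreal (h (lv (j0 + int m))) * indicator (S x (j0 + int m)) y)"
  proof (cases "y \<in> DI x j0")
    case False
    have "y \<notin> S x (j0 + int m)" for m
      using False DI_mono[OF x, of j0 "j0 + int m"] unfolding S_def by auto
    then show ?thesis using False by simp
  next
    case True
    then have yp: "y > 0" using DI_pos by blast
    show ?thesis
    proof (cases "y = x")
      case True
      have "x \<notin> S x (j0 + int m)" for m using x_notin_S[OF x] .
      moreover have "ennreal (h 0) = 0" using h0 by (rule ennreal_neg)
      ultimately show ?thesis using True dist_self[OF x] by simp
    next
      case False
      obtain j where j: "y \<in> DI x j" "y \<notin> DI x (j+1)" using shell[OF x yp False] by blast
      have jj: "j0 \<le> j" using shell_iff[OF x j, of j0] True by simp
      have "(\<Sum>m. ennreal (h (lv (j0 + int m))) * indicator (S x (j0 + int m)) y)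
          = ennreal (h (lv (j0 + int (nat (j - j0))))) * indicator (S x (j0 + int (nat (j - j0)))) y"
      proof (rule single_sum)
        fix m assume "m \<noteq> nat (j - j0)"
        then have "j0 + int m \<noteq> j" using jj by auto
        then show "ennreal (h (lv (j0 + int m))) * indicator (S x (j0 + int m)) y = 0"
          using S_mem[OF x j, of "j0 + int m"] by simp
      qed
      also have "j0 + int (nat (j - j0)) = j" using jj by simp
      finally show ?thesis using True dist_shell[OF x j] S_mem[OF x j, of j] by simp
    qed
  qed
qed

lemma outer_decomp:
  assumes x: "x > 0"
  shows "(\<integral>\<^sup>+ y \<in> {0<..} - DI x j0. ennreal (h (dyadic_dist x y)) \<partial>lborel)
       = (\<Sum>m. ennreal (h (lv (j0 - 1 - int m))) * ennreal (lv (j0 - 1 - int m) / 2))"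
proof (rule decomp[OF _ x])
  fix y
  show "ennreal (h (dyadic_dist x y)) * indicator ({0<..} - DI x j0) y
      = (\<Sum>m. ennreal (h (lv (j0 - 1 - int m))) * indicator (S x (j0 - 1 - int m)) y)"
  proof (cases "y \<in> {0<..} - DI x j0")
    case False
    have "y \<notin> S x (j0 - 1 - int m)" for m
    proof
      assume yS: "y \<in> S x (j0 - 1 - int m)"
      then have "y > 0" using S_pos by blast
      then have "y \<in> DI x j0" using False by simp
      moreover have "DI x j0 \<subseteq> DI x (j0 - 1 - int m + 1)" by (rule DI_mono[OF x]) simp
      ultimately show False using yS unfolding S_def by blast
    qed
    then show ?thesis using False by simp
  next
    case True
    then have yp: "y > 0" and yn: "y \<notin> DI x j0" by auto
    have False: "y \<noteq> x" using yn x_in_DI[OF x] by blast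
    obtain j where j: "y \<in> DI x j" "y \<notin> DI x (j+1)" using shell[OF x yp False] by blast
    have jj: "j < j0" using shell_iff[OF x j, of j0] yn by simp
    have "(\<Sum>m. ennreal (h (lv (j0 - 1 - int m))) * indicator (S x (j0 - 1 - int m)) y)
        = ennreal (h (lv (j0 - 1 - int (nat (j0 - 1 - j))))) * indicator (S x (j0 - 1 - int (nat (j0 - 1 - j)))) y"
    proof (rule single_sum)
      fix m assume "m \<noteq> nat (j0 - 1 - j)"
      then have "j0 - 1 - int m \<noteq> j" using jj by auto
      then show "ennreal (h (lv (j0 - 1 - int m))) * indicator (S x (j0 - 1 - int m)) y = 0"
        using S_mem[OF x j, of "j0 - 1 - int m"] by simp
    qed
    also have "j0 - 1 - int (nat (j0 - 1 - j)) = j" using jj by simp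
    finally show ?thesis using True dist_shell[OF x j] S_mem[OF x j, of j] by simp
  qed
qed

lemma inf_sum: assumes "\<And>m. c \<le> g m" "0 < c" shows "(\<Sum>m. ennreal (g m)) = \<infinity>"
proof -
  have nn: "0 \<le> g m" for m using assms(1)[of m] assms(2) by linarith
  have "\<not> summable g"
  proof
    assume "summable g"
    then have "g \<longlonglongrightarrow> 0" by (rule summable_LIMSEQ_zero)
    then have "eventually (\<lambda>m. g m < c) sequentially" using assms(2) by (rule order_tendstoD(2))
    then have "\<exists>m. g m < c" unfolding eventually_sequentially by blast
    then obtain m where "g m < c" by blast
    then show False using assms(1)[of m] by simp
  qed
  then have "(\<Sum>m. ennreal (g m)) = top" by (intro summable_iff_suminf_neq_top nn)
  then show ?thesis by simp
qed

lemma geo_sum: assumes "0 \<le> c" "0 \<le> q" "q < 1"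
  shows "(\<Sum>m. ennreal (c * q ^ m)) = ennreal (c / (1 - q))"
proof (rule suminf_ennreal_eq)
  show "0 \<le> c * q ^ m" for m using assms by simp
  have "(\<lambda>m. q ^ m) sums (1 / (1 - q))" using assms by (intro geometric_sums) simp
  then have "(\<lambda>m. c * q ^ m) sums (c * (1 / (1 - q)))" by (rule sums_mult)
  then show "(\<lambda>m. c * q ^ m) sums (c / (1 - q))" by simp
qed

lemma pow2_powr: "((2::real) ^ n) powr a = (2 powr a) ^ n"
proof -
  have "((2::real) ^ n) powr a = ((2::real) powr real n) powr a" by (simp only: powr_realpow[of 2, symmetric])
  also have "\<dots> = 2 powr (real n * a)" by (rule powr_powr)
  also have "\<dots> = (2 powr a) ^ n" by (rule powr_power[symmetric]) simp
  finally show ?thesis .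
qed

lemma lv_add: "lv (j0 + int m) = lv j0 / 2 ^ m"
proof -
  have "- real_of_int (j0 + int m) = - real_of_int j0 - real m" by simp
  then show ?thesis unfolding lv_def by (simp only: powr_diff powr_realpow)
qed

lemma lv_sub: "lv (j0 - 1 - int m) = lv j0 * 2 ^ (m+1)"
proof -
  have "- real_of_int (j0 - 1 - int m) = - real_of_int j0 + real (m+1)" by simp
  then show ?thesis unfolding lv_def by (simp only: powr_add powr_realpow)
qed

lemma term_gen: assumes "t > 0"
  shows "ennreal (1 / t powr p) * ennreal (t / 2) = ennreal (t powr (1 - p) / 2)"
proof -
  have "ennreal (1 / t powr p) * ennreal (t / 2) = ennreal (1 / t powr p * (t / 2))"
    using assms by (intro ennreal_mult[symmetric]) auto
  also have "1 / t powr p * (t / 2) = t powr (1 - p) / 2"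
  proof -
    have "t powr (1 - p) = t powr 1 / t powr p" by (rule powr_diff)
    also have "\<dots> = t / t powr p" using assms by simp
    finally show ?thesis by simp
  qed
  finally show ?thesis .
qed

lemma term_in: "ennreal (1 / lv (j0 + int m) powr p) * ennreal (lv (j0 + int m) / 2)
   = ennreal (lv j0 powr (1 - p) / 2 * (2 powr (p - 1)) ^ m)"
proof -
  have "lv (j0 + int m) powr (1 - p) = lv j0 powr (1 - p) / (2 powr (1 - p)) ^ m"
    unfolding lv_add using lv_pos[of j0] by (simp add: powr_divide pow2_powr)
  also have "\<dots> = lv j0 powr (1 - p) * (2 powr (p - 1)) ^ m"
    by (simp add: powr_minus[of 2 "1-p", symmetric] divide_inverse power_inverse[symmetric])
  finally show ?thesis using term_gen[OF lv_pos[of "j0 + int m"], of p] by simp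
qed

lemma term_out: "ennreal (1 / lv (j0 - 1 - int m) powr p) * ennreal (lv (j0 - 1 - int m) / 2)
   = ennreal (lv j0 powr (1 - p) / 2 * (2 powr (1 - p)) ^ (m + 1))"
proof -
  have "lv (j0 - 1 - int m) powr (1 - p) = lv j0 powr (1 - p) * (2 powr (1 - p)) ^ (m + 1)"
    unfolding lv_sub using lv_pos[of j0] by (simp add: powr_mult pow2_powr)
  then show ?thesis using term_gen[OF lv_pos[of "j0 - 1 - int m"], of p] by simp
qed

lemma term_one: "ennreal (1 / lv j) * ennreal (lv j / 2) = ennreal (1 / 2)"
proof -
  have "ennreal (1 / lv j) * ennreal (lv j / 2) = ennreal (1 / lv j * (lv j / 2))"
    using lv_pos[of j] by (intro ennreal_mult[symmetric]) auto
  then show ?thesis using lv_pos[of j] by simp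
qed

lemma inner_pow: assumes "x > 0"
  shows "(\<integral>\<^sup>+ y \<in> DI x j0. ennreal (1 / dyadic_dist x y powr p) \<partial>lborel)
       = (\<Sum>m. ennreal (lv j0 powr (1 - p) / 2 * (2 powr (p - 1)) ^ m))"
proof -
  have "(\<integral>\<^sup>+ y \<in> DI x j0. ennreal (1 / dyadic_dist x y powr p) \<partial>lborel)
       = (\<Sum>m. ennreal (1 / lv (j0 + int m) powr p) * ennreal (lv (j0 + int m) / 2))"
    using inner_decomp[where h="\<lambda>t. 1 / t powr p", OF assms] by simp
  also have "\<dots> = (\<Sum>m. ennreal (lv j0 powr (1 - p) / 2 * (2 powr (p - 1)) ^ m))"
    by (rule suminf_cong) (rule term_in)
  finally show ?thesis .
qed

lemma outer_pow: assumes "x > 0"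
  shows "(\<integral>\<^sup>+ y \<in> {0<..} - DI x j0. ennreal (1 / dyadic_dist x y powr p) \<partial>lborel)
       = (\<Sum>m. ennreal (lv j0 powr (1 - p) / 2 * (2 powr (1 - p)) ^ (m + 1)))"
proof -
  have "(\<integral>\<^sup>+ y \<in> {0<..} - DI x j0. ennreal (1 / dyadic_dist x y powr p) \<partial>lborel)
       = (\<Sum>m. ennreal (1 / lv (j0 - 1 - int m) powr p) * ennreal (lv (j0 - 1 - int m) / 2))"
    using outer_decomp[where h="\<lambda>t. 1 / t powr p", OF assms] by simp
  also have "\<dots> = (\<Sum>m. ennreal (lv j0 powr (1 - p) / 2 * (2 powr (1 - p)) ^ (m + 1)))"
    by (rule suminf_cong) (rule term_out)
  finally show ?thesis .
qed

lemma inner_one: assumes "x > 0"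
  shows "(\<integral>\<^sup>+ y \<in> DI x j0. ennreal (1 / dyadic_dist x y) \<partial>lborel) = \<infinity>"
proof -
  have "(\<integral>\<^sup>+ y \<in> DI x j0. ennreal (1 / dyadic_dist x y) \<partial>lborel)
       = (\<Sum>m. ennreal (1 / lv (j0 + int m)) * ennreal (lv (j0 + int m) / 2))"
    using inner_decomp[where h="\<lambda>t. 1 / t", OF assms] by simp
  also have "\<dots> = (\<Sum>m. ennreal (1 / 2))" by (rule suminf_cong) (rule term_one)
  also have "\<dots> = \<infinity>" by (rule inf_sum[of "1/2"]) auto
  finally show ?thesis .
qed

lemma outer_one: assumes "x > 0"
  shows "(\<integral>\<^sup>+ y \<in> {0<..} - DI x j0. ennreal (1 / dyadic_dist x y) \<partial>lborel) = \<infinity>"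
proof -
  have "(\<integral>\<^sup>+ y \<in> {0<..} - DI x j0. ennreal (1 / dyadic_dist x y) \<partial>lborel)
       = (\<Sum>m. ennreal (1 / lv (j0 - 1 - int m)) * ennreal (lv (j0 - 1 - int m) / 2))"
    using outer_decomp[where h="\<lambda>t. 1 / t", OF assms] by simp
  also have "\<dots> = (\<Sum>m. ennreal (1 / 2))" by (rule suminf_cong) (rule term_one)
  also have "\<dots> = \<infinity>" by (rule inf_sum[of "1/2"]) auto
  finally show ?thesis .
qed

lemma q_facts: assumes "\<alpha> > 0" shows "0 < (2::real) powr (- \<alpha>)" "(2::real) powr (- \<alpha>) < 1" "1 \<le> (2::real) powr \<alpha>"
proof -
  show "0 < (2::real) powr (- \<alpha>)" by simp
  have "(2::real) powr (- \<alpha>) < 2 powr 0" using assms by (intro powr_less_mono) auto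
  then show "(2::real) powr (- \<alpha>) < 1" by simp
  have "(2::real) powr 0 \<le> 2 powr \<alpha>" using assms by (intro powr_mono) auto
  then show "1 \<le> (2::real) powr \<alpha>" by simp
qed

lemma big_terms: fixes c Q :: real assumes "0 < c" "1 \<le> Q" shows "c \<le> c * Q ^ n"
proof -
  have "1 \<le> Q ^ n" using assms(2) by (rule one_le_power)
  then show ?thesis using mult_left_mono[of 1 "Q ^ n" c] assms(1) by simp
qed

lemma lv_lt_iff: assumes "lv j0 < r" "r \<le> 2 * lv j0" shows "lv j < r \<longleftrightarrow> j0 \<le> j"
proof
  assume "lv j < r"
  show "j0 \<le> j"
  proof (rule ccontr)
    assume "\<not> j0 \<le> j"
    then have "j \<le> j0 - 1" by simp
    then have "lv (j0 - 1) \<le> lv j" by (rule lv_mono)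
    then show False using lv_pred[of j0] assms \<open>lv j < r\<close> by simp
  qed
next
  assume "j0 \<le> j" then show "lv j < r" using lv_mono[of j0 j] assms by simp
qed

lemma per_point:
  fixes \<alpha> :: real
  assumes a: "\<alpha> > 0" and x: "x > 0" and r: "r > 0"
  shows
      "(dyadic_ball x r \<in> dyadic_family \<and> x \<in> dyadic_ball x r \<and> measure lborel (dyadic_ball x r) < r \<and>
       (\<forall>J\<in>dyadic_family. x \<in> J \<and> measure lborel J < r \<longrightarrow> J \<subseteq> dyadic_ball x r)) \<and>
      (\<integral>\<^sup>+ y \<in> dyadic_ball x r. ennreal (1 / dyadic_dist x y powr (1 - \<alpha>)) \<partial>lborel)
         = ennreal (1 / (2 * (1 - 2 powr (- \<alpha>))) * measure lborel (dyadic_ball x r) powr \<alpha>) \<and>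
      (\<integral>\<^sup>+ y \<in> dyadic_ball x r. ennreal (1 / dyadic_dist x y powr (1 + \<alpha>)) \<partial>lborel) = \<infinity> \<and>
      (\<integral>\<^sup>+ y \<in> {0<..} - dyadic_ball x r. ennreal (1 / dyadic_dist x y powr (1 + \<alpha>)) \<partial>lborel)
         = ennreal (2 powr (- \<alpha>) / (2 * (1 - 2 powr (- \<alpha>))) * measure lborel (dyadic_ball x r) powr (- \<alpha>)) \<and>
      (\<integral>\<^sup>+ y \<in> {0<..} - dyadic_ball x r. ennreal (1 / dyadic_dist x y powr (1 - \<alpha>)) \<partial>lborel) = \<infinity> \<and>
      (\<integral>\<^sup>+ y \<in> dyadic_ball x r. ennreal (1 / dyadic_dist x y) \<partial>lborel) = \<infinity> \<and>
      (\<integral>\<^sup>+ y \<in> {0<..} - dyadic_ball x r. ennreal (1 / dyadic_dist x y) \<partial>lborel) = \<infinity>"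
proof -
  obtain j0 where j0: "lv j0 < r" "r \<le> 2 * lv j0" using j0_ex[OF r] by blast
  have B: "dyadic_ball x r = DI x j0" by (rule ball_eq[OF x j0])
  define L where "L = lv j0"
  have Lp: "L > 0" unfolding L_def by (rule lv_pos)
  have M: "measure lborel (DI x j0) = L" unfolding DI_def L_def by (rule di_measure)
  define q :: real where "q = 2 powr (- \<alpha>)"
  have q0: "0 < q" and q1: "q < 1" using q_facts[OF a] unfolding q_def by auto
  have Q1: "1 \<le> (2::real) powr \<alpha>" using q_facts[OF a] by auto
  have pa: "dyadic_ball x r \<in> dyadic_family \<and> x \<in> dyadic_ball x r \<and> measure lborel (dyadic_ball x r) < r \<and>
       (\<forall>J\<in>dyadic_family. x \<in> J \<and> measure lborel J < r \<longrightarrow> J \<subseteq> dyadic_ball x r)"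
  proof (intro conjI ballI impI)
    show "dyadic_ball x r \<in> dyadic_family" unfolding B by (rule DI_fam)
    show "x \<in> dyadic_ball x r" unfolding B by (rule x_in_DI[OF x])
    show "measure lborel (dyadic_ball x r) < r" unfolding B M L_def by (rule j0(1))
  next
    fix J assume J: "J \<in> dyadic_family" and h: "x \<in> J \<and> measure lborel J < r"
    obtain j where Jj: "J = DI x j" using fam_DI[OF J x] h by blast
    have "lv j < r" using h unfolding Jj DI_def di_measure by simp
    then have "j0 \<le> j" using lv_lt_iff[OF j0] by simp
    then show "J \<subseteq> dyadic_ball x r" unfolding Jj B by (rule DI_mono[OF x])
  qed
  have pb: "(\<integral>\<^sup>+ y \<in> DI x j0. ennreal (1 / dyadic_dist x y powr (1 - \<alpha>)) \<partial>lborel)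
         = ennreal (1 / (2 * (1 - q)) * L powr \<alpha>)"
  proof -
    have "(\<integral>\<^sup>+ y \<in> DI x j0. ennreal (1 / dyadic_dist x y powr (1 - \<alpha>)) \<partial>lborel)
        = (\<Sum>m. ennreal (L powr \<alpha> / 2 * q ^ m))"
      using inner_pow[of x "1 - \<alpha>" j0, OF x] unfolding L_def q_def by simp
    also have "\<dots> = ennreal (L powr \<alpha> / 2 / (1 - q))" using q0 q1 by (intro geo_sum) auto
    also have "L powr \<alpha> / 2 / (1 - q) = 1 / (2 * (1 - q)) * L powr \<alpha>" by simp
    finally show ?thesis .
  qed
  have pc: "(\<integral>\<^sup>+ y \<in> DI x j0. ennreal (1 / dyadic_dist x y powr (1 + \<alpha>)) \<partial>lborel) = \<infinity>"
  proof -
    have "(\<integral>\<^sup>+ y \<in> DI x j0. ennreal (1 / dyadic_dist x y powr (1 + \<alpha>)) \<partial>lborel)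
        = (\<Sum>m. ennreal (L powr (- \<alpha>) / 2 * (2 powr \<alpha>) ^ m))"
      using inner_pow[of x "1 + \<alpha>" j0, OF x] unfolding L_def by simp
    also have "\<dots> = \<infinity>"
      by (rule inf_sum[of "L powr (- \<alpha>) / 2"]) (use Lp Q1 big_terms in auto)
    finally show ?thesis .
  qed
  have pd: "(\<integral>\<^sup>+ y \<in> {0<..} - DI x j0. ennreal (1 / dyadic_dist x y powr (1 + \<alpha>)) \<partial>lborel)
         = ennreal (q / (2 * (1 - q)) * L powr (- \<alpha>))"
  proof -
    have "(\<integral>\<^sup>+ y \<in> {0<..} - DI x j0. ennreal (1 / dyadic_dist x y powr (1 + \<alpha>)) \<partial>lborel)
        = (\<Sum>m. ennreal (L powr (- \<alpha>) / 2 * q ^ (m + 1)))"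
      using outer_pow[of x "1 + \<alpha>" j0, OF x] unfolding L_def q_def by simp
    also have "\<dots> = (\<Sum>m. ennreal (L powr (- \<alpha>) / 2 * q * q ^ m))"
      by (simp add: mult.assoc)
    also have "\<dots> = ennreal (L powr (- \<alpha>) / 2 * q / (1 - q))" using q0 q1 by (intro geo_sum) auto
    also have "L powr (- \<alpha>) / 2 * q / (1 - q) = q / (2 * (1 - q)) * L powr (- \<alpha>)" by simp
    finally show ?thesis .
  qed
  have pe: "(\<integral>\<^sup>+ y \<in> {0<..} - DI x j0. ennreal (1 / dyadic_dist x y powr (1 - \<alpha>)) \<partial>lborel) = \<infinity>"
  proof -
    have "(\<integral>\<^sup>+ y \<in> {0<..} - DI x j0. ennreal (1 / dyadic_dist x y powr (1 - \<alpha>)) \<partial>lborel)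
        = (\<Sum>m. ennreal (L powr \<alpha> / 2 * (2 powr \<alpha>) ^ (m + 1)))"
      using outer_pow[of x "1 - \<alpha>" j0, OF x] unfolding L_def by simp
    also have "\<dots> = \<infinity>"
    proof (rule inf_sum[of "L powr \<alpha> / 2"])
      fix m show "L powr \<alpha> / 2 \<le> L powr \<alpha> / 2 * (2 powr \<alpha>) ^ (m + 1)"
        by (rule big_terms) (use Lp Q1 in auto)
    qed (use Lp in simp)
    finally show ?thesis .
  qed
  show ?thesis
    using pa pb pc pd pe inner_one[OF x, of j0] outer_one[OF x, of j0]
    unfolding B M q_def by simp
qed

lemma ball_measure: assumes x: "x > 0" and r: "r > 0"
  shows "r / 2 \<le> measure lborel (dyadic_ball x r)" "measure lborel (dyadic_ball x r) < r"
proof -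
  obtain j0 where j0: "lv j0 < r" "r \<le> 2 * lv j0" using j0_ex[OF r] by blast
  have M: "measure lborel (dyadic_ball x r) = lv j0"
    unfolding ball_eq[OF x j0] DI_def by (rule di_measure)
  show "r / 2 \<le> measure lborel (dyadic_ball x r)" "measure lborel (dyadic_ball x r) < r"
    using j0 M by auto
qed

lemma b1: fixes M r \<alpha> :: real assumes "0 < r" "r / 2 \<le> M" "M < r" "\<alpha> > 0"
  shows "r powr \<alpha> * 2 powr (- \<alpha>) \<le> M powr \<alpha>" "M powr \<alpha> \<le> r powr \<alpha>"
proof -
  have e: "(r / 2) powr \<alpha> = r powr \<alpha> / 2 powr \<alpha>" by (rule powr_divide)
  have e2: "(2::real) powr (- \<alpha>) = inverse (2 powr \<alpha>)" by (rule powr_minus)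
  have "r powr \<alpha> * 2 powr (- \<alpha>) = (r / 2) powr \<alpha>" unfolding e e2 by (simp only: divide_inverse)
  also have "\<dots> \<le> M powr \<alpha>" using assms by (intro powr_mono2) auto
  finally show "r powr \<alpha> * 2 powr (- \<alpha>) \<le> M powr \<alpha>" .
  show "M powr \<alpha> \<le> r powr \<alpha>" using assms by (intro powr_mono2) auto
qed

lemma b2: fixes M r \<alpha> :: real assumes "0 < r" "r / 2 \<le> M" "M < r" "\<alpha> > 0"
  shows "r powr (- \<alpha>) \<le> M powr (- \<alpha>)" "M powr (- \<alpha>) \<le> r powr (- \<alpha>) * 2 powr \<alpha>"
proof -
  show "r powr (- \<alpha>) \<le> M powr (- \<alpha>)" using assms by (intro powr_mono2') auto
  have "M powr (- \<alpha>) \<le> (r / 2) powr (- \<alpha>)" using assms by (intro powr_mono2') auto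
  also have "\<dots> = r powr (- \<alpha>) / 2 powr (- \<alpha>)" by (rule powr_divide)
  also have "\<dots> = r powr (- \<alpha>) * 2 powr \<alpha>" by (simp only: powr_minus[of 2 \<alpha>] divide_inverse inverse_inverse_eq)
  finally show "M powr (- \<alpha>) \<le> r powr (- \<alpha>) * 2 powr \<alpha>" .
qed

theorem lemma2p2:
  fixes \<alpha> :: real
  assumes "\<alpha> > 0"
  shows
  "(\<forall>x>0. \<forall>r>0.
      \<comment> \<open>(a)\<close>
      (dyadic_ball x r \<in> dyadic_family \<and> x \<in> dyadic_ball x r \<and> measure lborel (dyadic_ball x r) < r \<and>
       (\<forall>J\<in>dyadic_family. x \<in> J \<and> measure lborel J < r \<longrightarrow> J \<subseteq> dyadic_ball x r)) \<and>
      \<comment> \<open>(b)\<close>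
      (\<integral>\<^sup>+ y \<in> dyadic_ball x r. ennreal (1 / dyadic_dist x y powr (1 - \<alpha>)) \<partial>lborel)
         = ennreal (1 / (2 * (1 - 2 powr (- \<alpha>))) * measure lborel (dyadic_ball x r) powr \<alpha>) \<and>
      \<comment> \<open>(c)\<close>
      (\<integral>\<^sup>+ y \<in> dyadic_ball x r. ennreal (1 / dyadic_dist x y powr (1 + \<alpha>)) \<partial>lborel) = \<infinity> \<and>
      \<comment> \<open>(d)\<close>
      (\<integral>\<^sup>+ y \<in> {0<..} - dyadic_ball x r. ennreal (1 / dyadic_dist x y powr (1 + \<alpha>)) \<partial>lborel)
         = ennreal (2 powr (- \<alpha>) / (2 * (1 - 2 powr (- \<alpha>))) * measure lborel (dyadic_ball x r) powr (- \<alpha>)) \<and>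
      \<comment> \<open>(e)\<close>
      (\<integral>\<^sup>+ y \<in> {0<..} - dyadic_ball x r. ennreal (1 / dyadic_dist x y powr (1 - \<alpha>)) \<partial>lborel) = \<infinity> \<and>
      \<comment> \<open>(f)\<close>
      (\<integral>\<^sup>+ y \<in> dyadic_ball x r. ennreal (1 / dyadic_dist x y) \<partial>lborel) = \<infinity> \<and>
      (\<integral>\<^sup>+ y \<in> {0<..} - dyadic_ball x r. ennreal (1 / dyadic_dist x y) \<partial>lborel) = \<infinity>)
   \<and> (\<exists>c C. 0 < c \<and> 0 < C \<and> (\<forall>x>0. \<forall>r>0.
        ennreal (c * r powr \<alpha>) \<le> (\<integral>\<^sup>+ y \<in> dyadic_ball x r. ennreal (1 / dyadic_dist x y powr (1 - \<alpha>)) \<partial>lborel) \<and>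
        (\<integral>\<^sup>+ y \<in> dyadic_ball x r. ennreal (1 / dyadic_dist x y powr (1 - \<alpha>)) \<partial>lborel) \<le> ennreal (C * r powr \<alpha>)))
   \<and> (\<exists>c C. 0 < c \<and> 0 < C \<and> (\<forall>x>0. \<forall>r>0.
        ennreal (c * r powr (- \<alpha>)) \<le> (\<integral>\<^sup>+ y \<in> {0<..} - dyadic_ball x r. ennreal (1 / dyadic_dist x y powr (1 + \<alpha>)) \<partial>lborel) \<and>
        (\<integral>\<^sup>+ y \<in> {0<..} - dyadic_ball x r. ennreal (1 / dyadic_dist x y powr (1 + \<alpha>)) \<partial>lborel) \<le> ennreal (C * r powr (- \<alpha>))))"
proof -
  define q :: real where "q = 2 powr (- \<alpha>)"
  have q0: "0 < q" and q1: "q < 1" using q_facts[OF assms] unfolding q_def by auto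
  define K where "K = 1 / (2 * (1 - q))"
  define K' where "K' = q / (2 * (1 - q))"
  have K: "K > 0" "K' > 0" using q0 q1 unfolding K_def K'_def by auto
  have B: "(\<integral>\<^sup>+ y \<in> dyadic_ball x r. ennreal (1 / dyadic_dist x y powr (1 - \<alpha>)) \<partial>lborel)
      = ennreal (K * measure lborel (dyadic_ball x r) powr \<alpha>)" if "x > 0" "r > 0" for x r
    using per_point[OF assms that] unfolding K_def q_def by blast
  have D: "(\<integral>\<^sup>+ y \<in> {0<..} - dyadic_ball x r. ennreal (1 / dyadic_dist x y powr (1 + \<alpha>)) \<partial>lborel)
      = ennreal (K' * measure lborel (dyadic_ball x r) powr (- \<alpha>))" if "x > 0" "r > 0" for x r
    using per_point[OF assms that] unfolding K'_def q_def by blast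
  show ?thesis
  proof (intro conjI)
    show "\<forall>x>0. \<forall>r>0.
      \<comment> \<open>(a)\<close>
      (dyadic_ball x r \<in> dyadic_family \<and> x \<in> dyadic_ball x r \<and> measure lborel (dyadic_ball x r) < r \<and>
       (\<forall>J\<in>dyadic_family. x \<in> J \<and> measure lborel J < r \<longrightarrow> J \<subseteq> dyadic_ball x r)) \<and>
      \<comment> \<open>(b)\<close>
      (\<integral>\<^sup>+ y \<in> dyadic_ball x r. ennreal (1 / dyadic_dist x y powr (1 - \<alpha>)) \<partial>lborel)
         = ennreal (1 / (2 * (1 - 2 powr (- \<alpha>))) * measure lborel (dyadic_ball x r) powr \<alpha>) \<and>
      \<comment> \<open>(c)\<close>
      (\<integral>\<^sup>+ y \<in> dyadic_ball x r. ennreal (1 / dyadic_dist x y powr (1 + \<alpha>)) \<partial>lborel) = \<infinity> \<and>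
      \<comment> \<open>(d)\<close>
      (\<integral>\<^sup>+ y \<in> {0<..} - dyadic_ball x r. ennreal (1 / dyadic_dist x y powr (1 + \<alpha>)) \<partial>lborel)
         = ennreal (2 powr (- \<alpha>) / (2 * (1 - 2 powr (- \<alpha>))) * measure lborel (dyadic_ball x r) powr (- \<alpha>)) \<and>
      \<comment> \<open>(e)\<close>
      (\<integral>\<^sup>+ y \<in> {0<..} - dyadic_ball x r. ennreal (1 / dyadic_dist x y powr (1 - \<alpha>)) \<partial>lborel) = \<infinity> \<and>
      \<comment> \<open>(f)\<close>
      (\<integral>\<^sup>+ y \<in> dyadic_ball x r. ennreal (1 / dyadic_dist x y) \<partial>lborel) = \<infinity> \<and>
      (\<integral>\<^sup>+ y \<in> {0<..} - dyadic_ball x r. ennreal (1 / dyadic_dist x y) \<partial>lborel) = \<infinity>"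
      using per_point[OF assms] by blast
  next
    show "\<exists>c C. 0 < c \<and> 0 < C \<and> (\<forall>x>0. \<forall>r>0.
        ennreal (c * r powr \<alpha>) \<le> (\<integral>\<^sup>+ y \<in> dyadic_ball x r. ennreal (1 / dyadic_dist x y powr (1 - \<alpha>)) \<partial>lborel) \<and>
        (\<integral>\<^sup>+ y \<in> dyadic_ball x r. ennreal (1 / dyadic_dist x y powr (1 - \<alpha>)) \<partial>lborel) \<le> ennreal (C * r powr \<alpha>))"
    proof (rule exI[of _ "K * 2 powr (- \<alpha>)"], rule exI[of _ K], intro conjI allI impI)
      show "0 < K * 2 powr (- \<alpha>)" "0 < K" using K by auto
      fix x r :: real assume xr: "x > 0" "r > 0"
      define M where "M = measure lborel (dyadic_ball x r)"
      have Mb: "r / 2 \<le> M" "M < r" using ball_measure[OF xr] unfolding M_def by auto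
      note bb = b1[OF xr(2) Mb assms]
      show "ennreal (K * 2 powr (- \<alpha>) * r powr \<alpha>) \<le> (\<integral>\<^sup>+ y \<in> dyadic_ball x r. ennreal (1 / dyadic_dist x y powr (1 - \<alpha>)) \<partial>lborel)"
        unfolding B[OF xr] M_def[symmetric] using mult_left_mono[OF bb(1), of K] K
        by (intro ennreal_leI) (simp add: mult_ac)
      show "(\<integral>\<^sup>+ y \<in> dyadic_ball x r. ennreal (1 / dyadic_dist x y powr (1 - \<alpha>)) \<partial>lborel) \<le> ennreal (K * r powr \<alpha>)"
        unfolding B[OF xr] M_def[symmetric] using mult_left_mono[OF bb(2), of K] K
        by (intro ennreal_leI) simp
    qed
  next
    show "\<exists>c C. 0 < c \<and> 0 < C \<and> (\<forall>x>0. \<forall>r>0.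
        ennreal (c * r powr (- \<alpha>)) \<le> (\<integral>\<^sup>+ y \<in> {0<..} - dyadic_ball x r. ennreal (1 / dyadic_dist x y powr (1 + \<alpha>)) \<partial>lborel) \<and>
        (\<integral>\<^sup>+ y \<in> {0<..} - dyadic_ball x r. ennreal (1 / dyadic_dist x y powr (1 + \<alpha>)) \<partial>lborel) \<le> ennreal (C * r powr (- \<alpha>)))"
    proof (rule exI[of _ K'], rule exI[of _ "K' * 2 powr \<alpha>"], intro conjI allI impI)
      show "0 < K' * 2 powr \<alpha>" "0 < K'" using K by auto
      fix x r :: real assume xr: "x > 0" "r > 0"
      define M where "M = measure lborel (dyadic_ball x r)"
      have Mb: "r / 2 \<le> M" "M < r" using ball_measure[OF xr] unfolding M_def by auto
      note bb = b2[OF xr(2) Mb assms]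
      show "ennreal (K' * r powr (- \<alpha>)) \<le> (\<integral>\<^sup>+ y \<in> {0<..} - dyadic_ball x r. ennreal (1 / dyadic_dist x y powr (1 + \<alpha>)) \<partial>lborel)"
        unfolding D[OF xr] M_def[symmetric] using mult_left_mono[OF bb(1), of K'] K
        by (intro ennreal_leI) simp
      show "(\<integral>\<^sup>+ y \<in> {0<..} - dyadic_ball x r. ennreal (1 / dyadic_dist x y powr (1 + \<alpha>)) \<partial>lborel) \<le> ennreal (K' * 2 powr \<alpha> * r powr (- \<alpha>))"
        unfolding D[OF xr] M_def[symmetric] using mult_left_mono[OF bb(2), of K'] K
        by (intro ennreal_leI) (simp add: mult_ac)
    qed
  qed
qed

end
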